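(* For every integer $k\geq 0$, the formal power series $G_k(x)$ satisfies $$G_k(x)=\frac{1+x\sum_{j=0}^{k-1}C(k,j)\bigl(4^{j}+(-1)^{k}(-4)^{j}\bigr)G_j(x)}{1-2^{k}(2^{k+1}+1)x},$$ where $C(k,j)=\binom{k}{j}$ (for $k=0$ this reads $G_0(x)=1/(1-3x)$).
   Context: The Stern polynomials $B_n(t)\in\mathbb{Z}[t]$ are defined by $B_0(t)=0$, $B_1(t)=1$, and for $n\geq 1$: $B_{2n}(t)=tB_n(t)$, $B_{2n+1}(t)=B_n(t)+B_{n+1}(t)$. For $n\geq1$ let $e(n)=\deg B_n(t)$. For each $n\ge0$ the set $\{a\geq1:\;e(a)=n\}$ is finite (it has $3^n$ elements). For $k,n\geq 0$ let $S_k(n)=\sum_{a\geq 1:\;e(a)=n}a^{k}$ and define the formal power series $G_k(x)=\sum_{a=1}^{\infty}a^{k}x^{e(a)}=\sum_{n=0}^{\infty}S_k(n)x^n$. *)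

theory Defs
  imports "HOL-Computational_Algebra.Computational_Algebra"
begin

function stern_poly :: "nat \<Rightarrow> int poly" where
  "stern_poly n =
     (if n = 0 then 0
      else if n = 1 then 1
      else if even n then [:0, 1:] * stern_poly (n div 2)
      else stern_poly (n div 2) + stern_poly (n div 2 + 1))"
  by auto
termination
  by (relation "measure id") (auto elim!: oddE)

definition stern_deg :: "nat \<Rightarrow> nat" where
  "stern_deg a = degree (stern_poly a)"

definition S :: "nat \<Rightarrow> nat \<Rightarrow> nat" where
  "S k n = (\<Sum>a \<in> {a. 1 \<le> a \<and> stern_deg a = n}. a ^ k)"

definition G :: "nat \<Rightarrow> rat fps" where
  "G k = Abs_fps (\<lambda>n. of_nat (S k n))"

end

theory Submission
  imports Defs
begin

declare stern_poly.simps [simp del]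

lemma sp0: "stern_poly 0 = 0" by (subst stern_poly.simps) simp
lemma sp1: "stern_poly 1 = 1" by (subst stern_poly.simps) simp
lemma sp1': "stern_poly (Suc 0) = 1" using sp1 by simp
lemma sp_even: "n \<ge> 1 \<Longrightarrow> stern_poly (2*n) = [:0,1:] * stern_poly n"
  by (subst stern_poly.simps) simp
lemma sp_odd: "n \<ge> 1 \<Longrightarrow> stern_poly (2*n+1) = stern_poly n + stern_poly (n+1)"
  by (subst stern_poly.simps) simp

lemma nonneg_add_ne0:
  fixes p q :: "int poly"
  assumes "\<forall>i. coeff p i \<ge> 0" "\<forall>i. coeff q i \<ge> 0" "p \<noteq> 0"
  shows "p + q \<noteq> 0"
proof
  assume "p + q = 0"
  then have "coeff p (degree p) + coeff q (degree p) = 0" by (metis coeff_add coeff_0)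
  moreover have "coeff p (degree p) > 0" using assms(1,3)
    by (metis leading_coeff_0_iff order_le_less)
  ultimately show False using assms(2) by (metis add_pos_nonneg less_irrefl)
qed

lemma deg_add_aux:
  fixes p q :: "int poly"
  assumes "\<forall>i. coeff p i \<ge> 0" "\<forall>i. coeff q i \<ge> 0" "degree q \<le> degree p"
  shows "degree (p + q) = degree p"
proof (cases "p = 0")
  case True then show ?thesis using assms by simp
next
  case False
  have "coeff p (degree p) > 0" using assms(1) False
    by (metis leading_coeff_0_iff order_le_less)
  then have "coeff (p+q) (degree p) \<noteq> 0" using assms(2) add_pos_nonneg[of "coeff p (degree p)" "coeff q (degree p)"] by simp
  then have "degree p \<le> degree (p+q)" by (rule le_degree)
  moreover have "degree (p+q) \<le> degree p" using assms(3) by (metis degree_add_le order_refl)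
  ultimately show ?thesis by simp
qed

lemma deg_add_nonneg:
  fixes p q :: "int poly"
  assumes "\<forall>i. coeff p i \<ge> 0" "\<forall>i. coeff q i \<ge> 0"
  shows "degree (p + q) = max (degree p) (degree q)"
proof (cases "degree q \<le> degree p")
  case True then show ?thesis using deg_add_aux[OF assms True] by simp
next
  case False then show ?thesis using deg_add_aux[OF assms(2,1)] by (simp add: add.commute)
qed

lemma sp_good: "n \<ge> 1 \<Longrightarrow> stern_poly n \<noteq> 0 \<and> (\<forall>i. coeff (stern_poly n) i \<ge> 0)"
proof (induction n rule: less_induct)
  case (less n)
  show ?case
  proof (cases "n = 1")
    case True then show ?thesis by (simp add: sp1')
  next
    case False
    show ?thesis
    proof (cases "even n")
      case True
      then obtain m where m: "n = 2*m" by blast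
      with less.prems False have m1: "m \<ge> 1" "m < n" by auto
      from less.IH[OF m1(2) m1(1)] have IH: "stern_poly m \<noteq> 0" "\<forall>i. coeff (stern_poly m) i \<ge> 0" by auto
      have "stern_poly n = pCons 0 (stern_poly m)" using sp_even[OF m1(1)] m by simp
      then show ?thesis using IH by (auto simp: coeff_pCons split: nat.splits)
    next
      case odd: False
      then obtain m where m: "n = 2*m+1" using oddE by blast
      with less.prems False have m1: "m \<ge> 1" "m < n" "m+1 < n" by auto
      from less.IH[OF m1(2) m1(1)] have IH: "stern_poly m \<noteq> 0" "\<forall>i. coeff (stern_poly m) i \<ge> 0" by auto
      from less.IH[OF m1(3)] have IH2: "\<forall>i. coeff (stern_poly (m+1)) i \<ge> 0" by auto
      have "stern_poly n = stern_poly m + stern_poly (m+1)" using sp_odd[OF m1(1)] m by simp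
      then show ?thesis using IH IH2 nonneg_add_ne0[OF IH(2) IH2 IH(1)] by auto
    qed
  qed
qed

abbreviation e where "e \<equiv> stern_deg"

lemma e1: "e 1 = 0" by (simp add: stern_deg_def sp1')
lemma e_even: "n \<ge> 1 \<Longrightarrow> e (2*n) = e n + 1"
  using sp_good[of n] by (simp add: stern_deg_def sp_even degree_mult_eq)
lemma e_odd: "n \<ge> 1 \<Longrightarrow> e (2*n+1) = max (e n) (e (n+1))"
proof -
  assume n: "n \<ge> 1"
  have "e (2*n+1) = degree (stern_poly n + stern_poly (n+1))"
    unfolding stern_deg_def using sp_odd[OF n] by simp
  also have "\<dots> = max (e n) (e (n+1))" unfolding stern_deg_def
    using sp_good[of n] sp_good[of "n+1"] n by (intro deg_add_nonneg) auto
  finally show ?thesis .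
qed

lemma e_diff: "n \<ge> 1 \<Longrightarrow> e (n+1) \<le> e n + 1 \<and> e n \<le> e (n+1) + 1"
proof (induction n rule: less_induct)
  case (less n)
  show ?case
  proof (cases "n = 1")
    case True
    have "e 2 = 1" using e1 e_even[of 1] by simp
    then have "e (Suc (Suc 0)) = 1" by (simp add: numeral_2_eq_2)
    then show ?thesis using True e1 by simp
  next
    case False
    show ?thesis
    proof (cases "even n")
      case True
      then obtain m where m: "n = 2*m" by blast
      with less.prems False have m1: "m \<ge> 1" "m < n" by auto
      from less.IH[OF m1(2) m1(1)] have IH: "e (m+1) \<le> e m + 1" by auto
      show ?thesis using m e_even[OF m1(1)] e_odd[OF m1(1)] IH by auto
    next
      case odd: False
      then obtain m where m: "n = 2*m+1" using oddE by blast
      with less.prems False have m1: "m \<ge> 1" "m < n" by auto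
      from less.IH[OF m1(2) m1(1)] have IH: "e m \<le> e (m+1) + 1" by auto
      have "n + 1 = 2*(m+1)" using m by simp
      then show ?thesis using m e_even[of "m+1"] e_odd[OF m1(1)] IH by auto
    qed
  qed
qed

lemma e_4p1: "n \<ge> 1 \<Longrightarrow> e (4*n+1) = e n + 1"
proof -
  assume n: "n \<ge> 1"
  have "4*n+1 = 2*(2*n)+1" by simp
  then have "e (4*n+1) = max (e (2*n)) (e (2*n+1))" using e_odd[of "2*n"] n by simp
  then show ?thesis using e_even[OF n] e_odd[OF n] e_diff[OF n] by auto
qed

lemma e_4m1: "n \<ge> 1 \<Longrightarrow> e (4*n-1) = e n + 1"
proof -
  assume n: "n \<ge> 1"
  have "4*n-1 = 2*(2*n-1)+1" "2*n-1+1 = 2*n" using n by auto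
  then have eq: "e (4*n-1) = max (e (2*n-1)) (e (2*n))" using e_odd[of "2*n-1"] n by simp
  have "e (2*n-1) \<le> e n + 1"
  proof (cases "n = 1")
    case True then show ?thesis using e1 by simp
  next
    case False
    then have "2*n-1 = 2*(n-1)+1" "n-1 \<ge> 1" "n-1+1 = n" using n by auto
    then show ?thesis using e_odd[of "n-1"] e_diff[of "n-1"] by auto
  qed
  then show ?thesis using eq e_even[OF n] by auto
qed

lemma parent: "m \<ge> 2 \<Longrightarrow> \<exists>a\<ge>1. (m = 2*a \<or> m = 4*a-1 \<or> m = 4*a+1) \<and> e m = e a + 1"
proof -
  assume m: "m \<ge> 2"
  show ?thesis
  proof (cases "even m")
    case True
    then obtain a where "m = 2*a" by blast
    then show ?thesis using m e_even[of a] by auto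
  next
    case False
    then have "m mod 4 = 1 \<or> m mod 4 = 3" by presburger
    then show ?thesis
    proof
      assume h: "m mod 4 = 1"
      define a where "a = m div 4"
      have "m = 4*a+1" "a \<ge> 1" using h m unfolding a_def by presburger+
      then show ?thesis using e_4p1 by blast
    next
      assume h: "m mod 4 = 3"
      define a where "a = m div 4 + 1"
      have "m = 4*a-1" "a \<ge> 1" using h m unfolding a_def by presburger+
      then show ?thesis using e_4m1 by blast
    qed
  qed
qed

definition A where "A n = {a::nat. 1 \<le> a \<and> e a = n}"

lemma A0: "A 0 = {1}"
proof -
  have "m \<ge> 1 \<Longrightarrow> e m = 0 \<Longrightarrow> m = 1" for m
    using parent[of m] by force
  then show ?thesis using e1 unfolding A_def by auto
qed

lemma A_Suc: "A (Suc n) = (\<lambda>a. 2*a) ` A n \<union> ((\<lambda>a. 4*a-1) ` A n \<union> (\<lambda>a. 4*a+1) ` A n)"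
proof
  show "A (Suc n) \<subseteq> (\<lambda>a. 2*a) ` A n \<union> ((\<lambda>a. 4*a-1) ` A n \<union> (\<lambda>a. 4*a+1) ` A n)"
  proof
    fix m assume "m \<in> A (Suc n)"
    then have m: "m \<ge> 1" "e m = Suc n" unfolding A_def by auto
    then have "m \<ge> 2" using e1 by (cases "m = 1") auto
    then obtain a where a: "a \<ge> 1" "m = 2*a \<or> m = 4*a-1 \<or> m = 4*a+1" "e m = e a + 1"
      using parent by blast
    then have "a \<in> A n" using m unfolding A_def by auto
    then show "m \<in> (\<lambda>a. 2*a) ` A n \<union> ((\<lambda>a. 4*a-1) ` A n \<union> (\<lambda>a. 4*a+1) ` A n)"
      using a(2) by blast
  qed
next
  show "(\<lambda>a. 2*a) ` A n \<union> ((\<lambda>a. 4*a-1) ` A n \<union> (\<lambda>a. 4*a+1) ` A n) \<subseteq> A (Suc n)"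
    unfolding A_def using e_even e_4p1 e_4m1 by auto
qed

lemma A_finite: "finite (A n)"
  by (induction n) (simp_all add: A0 A_Suc)

lemma S_A: "S k n = (\<Sum>a\<in>A n. a^k)" by (simp add: S_def A_def)

lemma S_Suc_rat: "(of_nat (S k (Suc n)) :: rat) =
   (\<Sum>a\<in>A n. (2*of_nat a)^k + (4*of_nat a - 1)^k + (4*of_nat a+1)^k)"
proof -
  have pos: "a \<in> A n \<Longrightarrow> a \<ge> 1" for a by (simp add: A_def)
  have fin: "finite (A n)" by (rule A_finite)
  have ne: "b \<ge> 1 \<Longrightarrow> 2*a \<noteq> 4*b-1 \<and> 2*a \<noteq> 4*b+1 \<and> 4*b-1 \<noteq> 4*c+(1::nat)" for a b c
    by presburger
  have d1: "(\<lambda>a. 2*a) ` A n \<inter> ((\<lambda>a. 4*a-1) ` A n \<union> (\<lambda>a. 4*a+1) ` A n) = {}"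
  proof -
    have "x \<notin> (\<lambda>a. 4*a-1) ` A n \<union> (\<lambda>a. 4*a+1) ` A n" if "x \<in> (\<lambda>a. 2*a) ` A n" for x
    proof
      assume "x \<in> (\<lambda>a. 4*a-1) ` A n \<union> (\<lambda>a. 4*a+1) ` A n"
      then obtain b where b: "b \<in> A n" "x = 4*b-1 \<or> x = 4*b+1" by blast
      from that obtain a where "x = 2*a" by blast
      with b ne[OF pos[OF b(1)], of a 0] show False by auto
    qed
    then show ?thesis by blast
  qed
  have d2: "(\<lambda>a. 4*a-1) ` A n \<inter> (\<lambda>a. 4*a+1) ` A n = {}"
  proof -
    have "x \<notin> (\<lambda>a. 4*a+1) ` A n" if "x \<in> (\<lambda>a. 4*a-1) ` A n" for x
    proof
      assume "x \<in> (\<lambda>a. 4*a+1) ` A n"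
      then obtain c where c: "x = 4*c+1" by blast
      from that obtain b where b: "b \<in> A n" "x = 4*b-1" by blast
      with c ne[OF pos[OF b(1)], of 0 c] show False by auto
    qed
    then show ?thesis by blast
  qed
  have i1: "inj_on (\<lambda>a::nat. 2*a) (A n)" by (auto simp: inj_on_def)
  have i2: "inj_on (\<lambda>a::nat. 4*a-1) (A n)" using pos by (auto simp: inj_on_def)
  have i3: "inj_on (\<lambda>a::nat. 4*a+1) (A n)" by (auto simp: inj_on_def)
  have "S k (Suc n) = (\<Sum>a\<in>A n. (2*a)^k) + ((\<Sum>a\<in>A n. (4*a-1)^k) + (\<Sum>a\<in>A n. (4*a+1)^k))"
  proof -
    let ?I1 = "(\<lambda>a. 2*a) ` A n" and ?I2 = "(\<lambda>a. 4*a-1) ` A n" and ?I3 = "(\<lambda>a. 4*a+1) ` A n"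
    have "S k (Suc n) = (\<Sum>x\<in>?I1 \<union> (?I2 \<union> ?I3). x^k)" unfolding S_A A_Suc ..
    also have "\<dots> = (\<Sum>x\<in>?I1. x^k) + (\<Sum>x\<in>?I2 \<union> ?I3. x^k)"
      by (rule sum.union_disjoint) (use fin d1 in auto)
    also have "(\<Sum>x\<in>?I2 \<union> ?I3. x^k) = (\<Sum>x\<in>?I2. x^k) + (\<Sum>x\<in>?I3. x^k)"
      by (rule sum.union_disjoint) (use fin d2 in auto)
    also have "(\<Sum>x\<in>?I1. x^k) = (\<Sum>a\<in>A n. (2*a)^k)" using sum.reindex[OF i1, of "\<lambda>x. x^k"] by simp
    also have "(\<Sum>x\<in>?I2. x^k) = (\<Sum>a\<in>A n. (4*a-1)^k)" using sum.reindex[OF i2, of "\<lambda>x. x^k"] by simp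
    also have "(\<Sum>x\<in>?I3. x^k) = (\<Sum>a\<in>A n. (4*a+1)^k)" using sum.reindex[OF i3, of "\<lambda>x. x^k"] by simp
    finally show ?thesis .
  qed
  then have "(of_nat (S k (Suc n)) :: rat) = (\<Sum>a\<in>A n. of_nat ((2*a)^k + (4*a-1)^k + (4*a+1)^k))"
    by (simp add: sum.distrib add.assoc)
  also have "\<dots> = (\<Sum>a\<in>A n. (2*of_nat a)^k + (4*of_nat a - 1)^k + (4*of_nat a+1)^k)"
  proof (rule sum.cong)
    fix a assume a: "a \<in> A n"
    have "(of_nat (4*a-1) :: rat) = 4*of_nat a - 1" using pos[OF a] by (simp add: of_nat_diff)
    then show "(of_nat ((2*a)^k + (4*a-1)^k + (4*a+1)^k) :: rat) = (2*of_nat a)^k + (4*of_nat a - 1)^k + (4*of_nat a+1)^k"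
      by (simp only: of_nat_add of_nat_power of_nat_mult of_nat_numeral of_nat_1)
  qed simp
  finally show ?thesis .
qed

lemma key: fixes x :: rat shows
  "(2*x)^k + (4*x-1)^k + (4*x+1)^k = of_nat (2^k*(2^(k+1)+1)) * x^k
     + (\<Sum>j<k. of_nat (k choose j) * (4^j + (-1)^k*(-4)^j) * x^j)"
proof -
  have p: "(4*x+1)^k = (\<Sum>j\<le>k. of_nat (k choose j) * 4^j * x^j)"
    using binomial_ring[of "4*x" 1 k] by (simp add: power_mult_distrib mult.assoc)
  have sq: "(-1::rat)^j * (-1)^j = 1" for j
    by (simp flip: power_mult_distrib)
  have m: "(4*x-1)^k = (\<Sum>j\<le>k. of_nat (k choose j) * ((-1)^k*(-4)^j) * x^j)"
  proof -
    have "(4*x-1)^k = (4*x + (-1))^k" by simp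
    also have "\<dots> = (\<Sum>j\<le>k. of_nat (k choose j) * (4*x)^j * (-1)^(k-j))"
      by (rule binomial_ring)
    also have "\<dots> = (\<Sum>j\<le>k. of_nat (k choose j) * ((-1)^k*(-4)^j) * x^j)"
    proof (rule sum.cong)
      fix j assume "j \<in> {..k}"
      then have "k = (k-j) + j" by simp
      then have "(-1::rat)^k = (-1)^(k-j) * (-1)^j" by (metis power_add)
      then have "(-1::rat)^k*(-4)^j = (-1)^(k-j) * ((-1)^j * (-1)^j) * 4^j"
        using power_minus[of "4::rat" j] by (simp only: mult_ac)
      then have "(-1::rat)^k*(-4)^j = (-1)^(k-j) * 4^j" using sq by simp
      then show "of_nat (k choose j) * (4*x)^j * (-1)^(k-j) = of_nat (k choose j) * ((-1)^k*(-4)^j) * x^j"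
        by (simp add: power_mult_distrib mult_ac)
    qed simp
    finally show ?thesis .
  qed
  have "(4*x-1)^k + (4*x+1)^k = (\<Sum>j\<le>k. of_nat (k choose j) * (4^j + (-1)^k*(-4)^j) * x^j)"
    unfolding p m sum.distrib[symmetric] by (rule sum.cong) (simp_all add: algebra_simps)
  also have "\<dots> = (4^k + (-1)^k*(-4)^k) * of_nat (k choose k) * x^k + (\<Sum>j<k. of_nat (k choose j) * (4^j + (-1)^k*(-4)^j) * x^j)"
    unfolding lessThan_Suc_atMost[symmetric] sum.lessThan_Suc by (simp only: mult_ac add.commute)
  also have "(4^k + (-1)^k*(-4)^k) = (2 * 4^k :: rat)"
  proof -
    have "(-1::rat)^k*(-4)^k = ((-1)^k * (-1)^k) * 4^k"
      using power_minus[of "4::rat" k] by (simp only: mult_ac)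
    then show ?thesis using sq by simp
  qed
  finally have h: "(4*x-1)^k + (4*x+1)^k = 2 * 4^k * x^k + (\<Sum>j<k. of_nat (k choose j) * (4^j + (-1)^k*(-4)^j) * x^j)"
    by simp
  have f: "(4::rat)^k = 2^k * 2^k" by (simp flip: power_mult_distrib)
  have c: "(of_nat (2^k*(2^(k+1)+1)) :: rat) = 2^k + 2*4^k"
    unfolding f by (simp add: algebra_simps)
  show ?thesis using h unfolding c by (simp add: power_mult_distrib algebra_simps)
qed

lemma coeff_rec: "(of_nat (S k (Suc m)) :: rat) =
  (\<Sum>j<k. of_nat (k choose j) * (4^j + (-1)^k*(-4)^j) * of_nat (S j m))
   + of_nat (2^k*(2^(k+1)+1)) * of_nat (S k m)"
proof -
  have Sr: "(of_nat (S j m) :: rat) = (\<Sum>a\<in>A m. of_nat a ^ j)" for j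
    by (simp add: S_A)
  show ?thesis
    unfolding S_Suc_rat key Sr sum_distrib_left sum.distrib
    by (simp add: sum.swap[of _ "{..<k}"] mult_ac)
qed

theorem mainTheorem8:
  fixes k :: nat
  shows "G k =
    (1 + fps_X * (\<Sum>j<k. fps_const (of_nat (k choose j) * (4 ^ j + (-1) ^ k * (-4) ^ j)) * G j))
    / (1 - fps_const (of_nat (2 ^ k * (2 ^ (k + 1) + 1))) * fps_X)"
proof -
  define T where "T = (\<Sum>j<k. fps_const (of_nat (k choose j) * (4 ^ j + (-1) ^ k * (-4) ^ j)) * G j :: rat fps)"
  define c :: rat where "c = of_nat (2 ^ k * (2 ^ (k + 1) + 1))"
  define D where "D = 1 - fps_const c * fps_X"
  have H: "G k = 1 + fps_X * (T + fps_const c * G k)"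
  proof (rule fps_ext)
    fix n show "G k $ n = (1 + fps_X * (T + fps_const c * G k)) $ n"
    proof (cases n)
      case 0
      have "S k 0 = 1" by (simp add: S_A A0)
      then show ?thesis using 0 by (simp add: G_def)
    next
      case (Suc m)
      then show ?thesis
        using coeff_rec[of k m] by (simp add: G_def T_def c_def fps_sum_nth)
    qed
  qed
  have D0: "D \<noteq> 0"
  proof
    assume "D = 0" then have "D $ 0 = 0" by simp
    then show False by (simp add: D_def)
  qed
  have "G k * D = 1 + fps_X * T"
    using H unfolding D_def by (simp add: algebra_simps)
  then have "G k = (1 + fps_X * T) / D" using D0
    by (metis nonzero_mult_div_cancel_right)
  then show ?thesis unfolding T_def D_def c_def .
qed

end
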